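(* Fix an agent $k$ and a neighbor $\ell$ that are paired at time $i$. Let $\delta_k\in(0,1)$, $r_k\in(0,1)$, $c_k>0$, $\theta_{k\ell}(i)\in[0,1]$, $\theta_{\ell k}(i)\in(0,1]$, and let $A_0,A_1$ be real numbers; set $b_k(i)\triangleq A_0-A_1$ and $\gamma_k(i)\triangleq b_k(i)/c_k$. For each candidate action $a\in\{0,1\}$ of agent $k$ at time $i$, define agent $k$'s forecast of its own future reputation by $\theta^a(i)=\theta_{k\ell}(i)$ and $\theta^a(t+1)=r_k\theta^a(t)+(1-r_k)a$ for $t\ge i$ (i.e., agent $k$ is forecast to repeat action $a$ at all future times $t\ge i$), and define the long-term discounted cost $$J(a)\triangleq\sum_{t=i}^{\infty}\delta_k^{t-i}\Big[\big(1-\theta^a(t)\theta_{\ell k}(i)\big)A_0+\theta^a(t)\theta_{\ell k}(i)A_1+a\,c_k\Big].$$ Agent $k$'s best response is $a_{k\ell}(i)=1$ if $J(1)<J(0)$ and $a_{k\ell}(i)=0$ otherwise. Then $$a_{k\ell}(i)=\begin{cases}1,&\text{if }\gamma_k(i)=\dfrac{b_k(i)}{c_k}>\dfrac{\chi_k}{\theta_{\ell k}(i)},\\[2mm]0,&\text{otherwise,}\end{cases}\qquad\text{where }\chi_k\triangleq\frac{1-\delta_k r_k}{\delta_k(1-r_k)}.$$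
   Context: Setting: agents estimate a common vector; at time $i$ paired agents $k,\ell$ each decide whether to share ($a=1$, costing the sharer $c_k>0$) or not ($a=0$). $A_0$ (resp. $A_1$) is agent $k$'s expected next-step mean-square estimation cost, conditioned on its current estimate, when agent $\ell$ does not share (resp. shares) its intermediate estimate; $b_k(i)=A_0-A_1$ is the benefit to $k$ of $\ell$'s sharing. Reputation scores $\theta_{\ell k}$ (kept by $k$ about $\ell$) and $\theta_{k\ell}$ (kept by $\ell$ about $k$) are updated when paired by $\theta\leftarrow r\theta+(1-r)\cdot(\text{action})$. Agent $k$ believes that $\ell$ shares at time $t$ with probability $B(a_{\ell k}(t)=1)=\theta_{k\ell}(t)\theta_{\ell k}(t)$. Bounded rationality (the paper's Assumptions 1 and 2): when choosing its action at time $i$, agent $k$ assumes that its estimate, the pairing with $\ell$, and the score $\theta_{\ell k}$ remain at their time-$i$ values for all $t\ge i$, and that both agents repeat their time-$i$ actions in the future; the cost $J(a)$ above is the resulting expected long-term discounted cost $\sum_{t\ge i}\delta_k^{t-i}\mathbb{E}[J^{\rm act}_k(a_{\ell k}(t))+a_{k\ell}(t)c_k]$, with the expectation over $a_{\ell k}(t)$ taken under the belief. *)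

theory Defs
  imports "HOL-Analysis.Analysis"
begin

text \<open>Forecast reputation: the index n stands for t - i (t >= i).
  theta_fc th0 r a 0 = th0, theta_fc (n+1) = r * theta_fc n + (1 - r) * a.\<close>
fun theta_fc :: "real \<Rightarrow> real \<Rightarrow> real \<Rightarrow> nat \<Rightarrow> real" where
  "theta_fc th0 r a 0 = th0"
| "theta_fc th0 r a (Suc n) = r * theta_fc th0 r a n + (1 - r) * a"

definition Jcost :: "real \<Rightarrow> real \<Rightarrow> real \<Rightarrow> real \<Rightarrow> real \<Rightarrow> real \<Rightarrow> real \<Rightarrow> real \<Rightarrow> real" where
  "Jcost \<delta> r c th_kl th_lk A0 A1 a =
     (\<Sum>n. \<delta> ^ n * ((1 - theta_fc th_kl r a n * th_lk) * A0
                     + theta_fc th_kl r a n * th_lk * A1 + a * c))"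

definition best_response :: "real \<Rightarrow> real \<Rightarrow> real \<Rightarrow> real \<Rightarrow> real \<Rightarrow> real \<Rightarrow> real \<Rightarrow> nat" where
  "best_response \<delta> r c th_kl th_lk A0 A1 =
     (if Jcost \<delta> r c th_kl th_lk A0 A1 1 < Jcost \<delta> r c th_kl th_lk A0 A1 0 then 1 else 0)"

definition chi :: "real \<Rightarrow> real \<Rightarrow> real" where
  "chi \<delta> r = (1 - \<delta> * r) / (\<delta> * (1 - r))"

end

theory Submission
  imports Defs
begin

lemma theta_closed: "theta_fc th0 r a n = a + r^n * (th0 - a)"
proof (induction n)
  case (Suc n) then show ?case by (simp only: theta_fc.simps Suc.IH) (simp add: algebra_simps)
qed simp

lemma J_closed:
  assumes "\<bar>\<delta>\<bar> < 1" "\<bar>\<delta> * r\<bar> < 1"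
  shows "Jcost \<delta> r c th_kl th_lk A0 A1 a =
     (A0 + a*c - th_lk*(A0-A1)*a) / (1-\<delta>) + (- th_lk*(A0-A1)*(th_kl - a)) / (1 - \<delta>*r)"
proof -
  have s1: "(\<lambda>n. (A0 + a*c - th_lk*(A0-A1)*a) * \<delta>^n) sums ((A0 + a*c - th_lk*(A0-A1)*a) * (1/(1-\<delta>)))"
    using geometric_sums[of \<delta>] assms(1) by (intro sums_mult) auto
  have s2: "(\<lambda>n. (- th_lk*(A0-A1)*(th_kl - a)) * (\<delta>*r)^n) sums ((- th_lk*(A0-A1)*(th_kl - a)) * (1/(1-\<delta>*r)))"
    using geometric_sums[of "\<delta>*r"] assms(2) by (intro sums_mult) auto
  have eq: "(\<lambda>n. \<delta> ^ n * ((1 - theta_fc th_kl r a n * th_lk) * A0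
                     + theta_fc th_kl r a n * th_lk * A1 + a * c)) =
        (\<lambda>n. (A0 + a*c - th_lk*(A0-A1)*a) * \<delta>^n + (- th_lk*(A0-A1)*(th_kl - a)) * (\<delta>*r)^n)"
    by (rule ext) (simp add: theta_closed power_mult_distrib algebra_simps)
  show ?thesis unfolding Jcost_def eq
    using sums_unique[OF sums_add[OF s1 s2]] by simp
qed

theorem lemma1:
  fixes \<delta> r c th_kl th_lk A0 A1 :: real
  assumes "0 < \<delta>" "\<delta> < 1" "0 < r" "r < 1" "0 < c"
    and "0 \<le> th_kl" "th_kl \<le> 1" "0 < th_lk" "th_lk \<le> 1"
  shows "best_response \<delta> r c th_kl th_lk A0 A1 =
           (if (A0 - A1) / c > chi \<delta> r / th_lk then 1 else 0)"
proof -
  have a1: "\<bar>\<delta>\<bar> < 1" using assms by auto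
  have dr: "\<delta>*r < \<delta>" using assms by (simp add: mult_less_cancel_left)
  have dr0: "0 < \<delta>*r" using assms by simp
  have a2: "\<bar>\<delta>*r\<bar> < 1" using assms dr dr0 by auto
  have p1: "1 - \<delta> > 0" "1 - \<delta>*r > 0" "\<delta>*(1-r) > 0" using assms dr dr0 by auto
  define b where "b = A0 - A1"
  have diff: "Jcost \<delta> r c th_kl th_lk A0 A1 1 - Jcost \<delta> r c th_kl th_lk A0 A1 0
      = (c*(1-\<delta>*r) - th_lk*b*(\<delta>*(1-r))) / ((1-\<delta>)*(1-\<delta>*r))"
    unfolding J_closed[OF a1 a2] b_def using p1
    apply (simp add: divide_simps)
    apply (simp add: algebra_simps)
    done
  have "(Jcost \<delta> r c th_kl th_lk A0 A1 1 < Jcost \<delta> r c th_kl th_lk A0 A1 0)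
      \<longleftrightarrow> c*(1-\<delta>*r) < th_lk*b*(\<delta>*(1-r))"
  proof -
    have "(Jcost \<delta> r c th_kl th_lk A0 A1 1 < Jcost \<delta> r c th_kl th_lk A0 A1 0)
       \<longleftrightarrow> (c*(1-\<delta>*r) - th_lk*b*(\<delta>*(1-r))) / ((1-\<delta>)*(1-\<delta>*r)) < 0"
      using diff by linarith
    also have "\<dots> \<longleftrightarrow> c*(1-\<delta>*r) - th_lk*b*(\<delta>*(1-r)) < 0"
      using p1 by (simp add: divide_less_0_iff mult_pos_pos) (use mult_pos_pos[OF p1(1) p1(2)] in linarith)
    finally show ?thesis by simp
  qed
  moreover have "(b / c > chi \<delta> r / th_lk) \<longleftrightarrow> c*(1-\<delta>*r) < th_lk*b*(\<delta>*(1-r))"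
    unfolding chi_def using p1 assms by (simp add: field_simps)
  ultimately show ?thesis unfolding best_response_def b_def by simp
qed

end
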